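(* Let $s$ be an aperiodic standard episturmian word over a finite alphabet $A$, and let $s=U_1U_2\cdots U_n\cdots$ be a factorization of $s$ where each $U_i$ ($i\ge1$) is a non-empty prefix of $s$. Then there exist indices $i\neq j$ such that $U_i$ and $U_j$ end in different letters.
   Context: An infinite word $s$ over a finite alphabet $A$ is standard episturmian if its set of factors is closed under reversal (if $u$ is a factor so is its reversal) and every left special factor of $s$ is a prefix of $s$; here a factor $u$ is left special if there are distinct letters $x,y\in A$ with $xu$ and $yu$ both factors of $s$. Aperiodic means not ultimately periodic. *)

theory Defs
  imports Main
begin

definition factor_at :: "(nat \<Rightarrow> 'a) \<Rightarrow> nat \<Rightarrow> nat \<Rightarrow> 'a list" where
  "factor_at s i n = map s [i..<i+n]"

definition factors :: "(nat \<Rightarrow> 'a) \<Rightarrow> 'a list set" where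
  "factors s = {u. \<exists>i. u = factor_at s i (length u)}"

definition is_prefix_of :: "'a list \<Rightarrow> (nat \<Rightarrow> 'a) \<Rightarrow> bool" where
  "is_prefix_of u s \<longleftrightarrow> u = factor_at s 0 (length u)"

definition left_special :: "(nat \<Rightarrow> 'a) \<Rightarrow> 'a list \<Rightarrow> bool" where
  "left_special s u \<longleftrightarrow> (\<exists>x y. x \<noteq> y \<and> x # u \<in> factors s \<and> y # u \<in> factors s)"

definition standard_episturmian :: "(nat \<Rightarrow> 'a) \<Rightarrow> bool" where
  "standard_episturmian s \<longleftrightarrow>
     (\<forall>u \<in> factors s. rev u \<in> factors s) \<and>
     (\<forall>u. left_special s u \<longrightarrow> is_prefix_of u s)"

definition ultimately_periodic :: "(nat \<Rightarrow> 'a) \<Rightarrow> bool" where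
  "ultimately_periodic s \<longleftrightarrow> (\<exists>p>0. \<exists>N. \<forall>n\<ge>N. s (n + p) = s n)"

text \<open>s = U 0 U 1 U 2 ... : the word s is the infinite concatenation of the
  nonempty finite words U i (indices shifted: U_1 of the paper is U 0).\<close>
definition is_factorization :: "(nat \<Rightarrow> 'a list) \<Rightarrow> (nat \<Rightarrow> 'a) \<Rightarrow> bool" where
  "is_factorization U s \<longleftrightarrow> (\<forall>i. U i \<noteq> []) \<and>
     (\<forall>i. U i = factor_at s (\<Sum>j<i. length (U j)) (length (U i)))"

end

theory Submission
  imports Defs
begin


definition occ :: "(nat \<Rightarrow> 'a) \<Rightarrow> nat \<Rightarrow> 'a list \<Rightarrow> bool" where
  "occ s i w \<longleftrightarrow> factor_at s i (length w) = w"

lemma length_factor_at[simp]: "length (factor_at s i n) = n"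
  by (simp add: factor_at_def)

lemma nth_factor_at[simp]: "k < n \<Longrightarrow> factor_at s i n ! k = s (i + k)"
  by (simp add: factor_at_def)

lemma occ_Nil[simp]: "occ s i []"
  by (simp add: occ_def factor_at_def)

lemma factor_at_Suc: "factor_at s i (Suc n) = s i # factor_at s (Suc i) n"
  by (simp add: factor_at_def upt_rec)

lemma occ_Cons[simp]: "occ s i (x # xs) \<longleftrightarrow> s i = x \<and> occ s (Suc i) xs"
  by (auto simp: occ_def factor_at_Suc)

lemma occ_append[simp]: "occ s i (xs @ ys) \<longleftrightarrow> occ s i xs \<and> occ s (i + length xs) ys"
  by (induction xs arbitrary: i) auto

lemma occ_iff: "occ s i w \<longleftrightarrow> (\<forall>k<length w. s (i+k) = w ! k)"
  by (auto simp: occ_def list_eq_iff_nth_eq)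

lemma factors_occ: "u \<in> factors s \<longleftrightarrow> (\<exists>i. occ s i u)"
  unfolding factors_def occ_def by (auto; metis)

lemma prefix_occ: "is_prefix_of u s \<longleftrightarrow> occ s 0 u"
  by (auto simp: is_prefix_of_def occ_def)

lemma occ_factor_at: "occ s i (factor_at s i n)"
  by (simp add: occ_def)

lemma occ_unique: "occ s i w \<Longrightarrow> occ s i v \<Longrightarrow> length w = length v \<Longrightarrow> w = v"
  by (metis occ_def)

lemma occ_last: "occ s i w \<Longrightarrow> w \<noteq> [] \<Longrightarrow> s (i + length w - 1) = last w"
proof -
  assume o: "occ s i w" and ne: "w \<noteq> []"
  have l: "length w - 1 < length w" using ne by simp
  have "s (i + (length w - 1)) = w ! (length w - 1)" using o l unfolding occ_iff by blast
  moreover have "i + (length w - 1) = i + length w - 1" using ne by (cases w) auto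
  ultimately show ?thesis using ne by (simp add: last_conv_nth)
qed

lemma factors_suffix: "xs @ ys \<in> factors s \<Longrightarrow> ys \<in> factors s"
  by (auto simp: factors_occ)

lemma succ_unique:
  assumes se: "standard_episturmian s" and ne: "z \<noteq> s 0"
    and n: "s n = z" and m: "s m = z"
  shows "s (Suc n) = s (Suc m)"
proof (rule ccontr)
  assume H: "s (Suc n) \<noteq> s (Suc m)"
  have "[z, s (Suc n)] \<in> factors s" using n by (auto simp: factors_occ intro!: exI[of _ n])
  hence 1: "rev [z, s (Suc n)] \<in> factors s" using se unfolding standard_episturmian_def by blast
  have "[z, s (Suc m)] \<in> factors s" using m by (auto simp: factors_occ intro!: exI[of _ m])
  hence 2: "rev [z, s (Suc m)] \<in> factors s" using se unfolding standard_episturmian_def by blast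
  have "left_special s [z]" unfolding left_special_def using 1 2 H by auto
  hence "is_prefix_of [z] s" using se unfolding standard_episturmian_def by blast
  hence "z = s 0" by (simp add: prefix_occ)
  with ne show False by simp
qed

lemma nonconst: "\<not> ultimately_periodic s \<Longrightarrow> \<exists>n. s n \<noteq> s 0"
  unfolding ultimately_periodic_def by (metis zero_less_one)

lemma separating:
  assumes se: "standard_episturmian s" and ap: "\<not> ultimately_periodic s"
  shows "s n = s 0 \<or> s (Suc n) = s 0"
proof (rule ccontr)
  assume "\<not> ?thesis"
  hence x: "s n \<noteq> s 0" and y: "s (Suc n) \<noteq> s 0" by auto
  have "[s n, s (Suc n)] \<in> factors s" by (auto simp: factors_occ intro!: exI[of _ n])
  hence "rev [s n, s (Suc n)] \<in> factors s" using se unfolding standard_episturmian_def by blast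
  then obtain r where r: "s r = s (Suc n)" "s (Suc r) = s n" by (auto simp: factors_occ)
  have per: "s (n + 2*k) = s n \<and> s (n + 2*k + 1) = s (Suc n)" for k
  proof (induction k)
    case 0 then show ?case by simp
  next
    case (Suc k)
    have a: "s (n + 2*k + 1) = s (Suc n)" using Suc by simp
    have "s (Suc (n + 2*k + 1)) = s (Suc r)" using succ_unique[OF se y a r(1)] .
    hence c: "s (n + 2 * Suc k) = s n" using r(2) by simp
    have "s (Suc (n + 2*Suc k)) = s (Suc n)" using succ_unique[OF se x c refl] by simp
    then show ?case using c by simp
  qed
  have "\<forall>m\<ge>n. s (m + 2) = s m"
  proof (intro allI impI)
    fix m assume "n \<le> m"
    then obtain d where d: "m = n + d" by (metis le_add_diff_inverse)
    have "\<exists>k. d = 2*k \<or> d = 2*k+1" by presburger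
    then obtain k where "d = 2*k \<or> d = 2*k+1" by blast
    then show "s (m + 2) = s m"
    proof
      assume "d = 2*k"
      then show ?thesis using per[of k] per[of "Suc k"] d by (simp add: algebra_simps)
    next
      assume "d = 2*k+1"
      then show ?thesis using per[of k] per[of "Suc k"] d by (simp add: algebra_simps)
    qed
  qed
  hence "ultimately_periodic s" unfolding ultimately_periodic_def
    by (intro exI[of _ 2] conjI exI[of _ n]) auto
  with ap show False by simp
qed

definition mu1 :: "'a \<Rightarrow> 'a \<Rightarrow> 'a list" where
  "mu1 b x = (if x = b then [b] else [b, x])"

definition mu :: "'a \<Rightarrow> 'a list \<Rightarrow> 'a list" where
  "mu b xs = concat (map (mu1 b) xs)"

lemma mu_Nil[simp]: "mu b [] = []" by (simp add: mu_def)
lemma mu_Cons[simp]: "mu b (x # xs) = mu1 b x @ mu b xs" by (simp add: mu_def)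
lemma mu_append[simp]: "mu b (xs @ ys) = mu b xs @ mu b ys" by (simp add: mu_def)

lemma mu_rev: "rev (mu b u @ [b]) = mu b (rev u) @ [b]"
  by (induction u) (auto simp: mu1_def)

lemma mu1_split: "mu1 b x = butlast (mu1 b x) @ [x]"
  by (simp add: mu1_def)

lemma mu_Nil_iff[simp]: "mu b w = [] \<longleftrightarrow> w = []"
  by (cases w) (auto simp: mu1_def)

lemma last_mu: "w \<noteq> [] \<Longrightarrow> last (mu b w) = last w"
  by (induction w) (auto simp: mu1_def)

lemma mu_replicate: "mu b (replicate m b) = replicate m b"
  by (induction m) (auto simp: mu1_def)

lemma len_mu: "length (mu b w) = length w + length (filter (\<lambda>x. x \<noteq> b) w)"
  by (induction w) (auto simp: mu1_def)

lemma set_mu1: "set (mu b w) \<subseteq> insert b (set w)"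
  by (induction w) (auto simp: mu1_def)

lemma set_mu2: "set w \<subseteq> set (mu b w)"
  by (induction w) (auto simp: mu1_def)

fun PP :: "(nat \<Rightarrow> 'a) \<Rightarrow> nat \<Rightarrow> nat" where
  "PP s 0 = 0"
| "PP s (Suc k) = PP s k + (if s (PP s k + 1) = s 0 then 1 else 2)"

definition ds :: "(nat \<Rightarrow> 'a) \<Rightarrow> nat \<Rightarrow> 'a" where "ds s k = s (PP s k + 1)"

lemma P_Suc: "PP s (Suc k) = PP s k + (if ds s k = s 0 then 1 else 2)"
  by (simp add: ds_def)

lemma dec:
  "occ s (PP s k) (mu (s 0) w @ r) \<Longrightarrow> (w \<noteq> [] \<Longrightarrow> last w = s 0 \<Longrightarrow> r \<noteq> [] \<and> hd r = s 0)
   \<Longrightarrow> occ (ds s) k w"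
proof (induction w arbitrary: k)
  case Nil show ?case by simp
next
  case (Cons x w)
  have o: "occ s (PP s k) (mu1 (s 0) x @ (mu (s 0) w @ r))" using Cons.prems(1) by simp
  have IHc: "w \<noteq> [] \<Longrightarrow> last w = s 0 \<Longrightarrow> r \<noteq> [] \<and> hd r = s 0" using Cons.prems(2) by simp
  show ?case
  proof (cases "x = s 0")
    case True
    have nxt: "\<exists>zs. mu (s 0) w @ r = s 0 # zs"
    proof (cases w)
      case Nil then show ?thesis using Cons.prems(2) True by (cases r) auto
    next
      case (Cons y ys) then show ?thesis by (simp add: mu1_def)
    qed
    from o True have o1: "occ s (Suc (PP s k)) (mu (s 0) w @ r)" by (simp add: mu1_def)
    from nxt obtain zs where "mu (s 0) w @ r = s 0 # zs" by blast
    with o1 have "occ s (Suc (PP s k)) (s 0 # zs)" by metis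
    hence "s (Suc (PP s k)) = s 0" by (simp only: occ_Cons)
    hence ds: "ds s k = x" "PP s (Suc k) = Suc (PP s k)" using True by (simp_all add: ds_def)
    have "occ (ds s) (Suc k) w" using Cons.IH[of "Suc k"] o1 ds(2) IHc by simp
    thus ?thesis using ds by simp
  next
    case False
    from o False have a: "s (Suc (PP s k)) = x" and o2: "occ s (Suc (Suc (PP s k))) (mu (s 0) w @ r)"
      by (simp_all add: mu1_def)
    hence ds: "ds s k = x" "PP s (Suc k) = Suc (Suc (PP s k))" using False by (simp_all add: ds_def)
    have "occ (ds s) (Suc k) w" using Cons.IH[of "Suc k"] o2 ds(2) IHc by simp
    thus ?thesis using ds by simp
  qed
qed



definition run :: "(nat \<Rightarrow> 'b) \<Rightarrow> nat" where "run t = (LEAST n. t n \<noteq> t 0)"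

locale sepw =
  fixes s :: "nat \<Rightarrow> 'a"
  assumes sep: "s n = s 0 \<or> s (Suc n) = s 0"
begin

lemma s_P: "s (PP s k) = s 0"
proof (induction k)
  case 0 show ?case by simp
next
  case (Suc k)
  show ?case
  proof (cases "s (Suc (PP s k)) = s 0")
    case True then show ?thesis by simp
  next
    case False
    then have "s (Suc (Suc (PP s k))) = s 0" using sep[of "Suc (PP s k)"] by simp
    then show ?thesis using False by simp
  qed
qed

lemma P_less: "PP s k < PP s (Suc k)" by simp

lemma P_smono: "strict_mono (PP s)"
  by (rule strict_mono_Suc_iff[THEN iffD2]) (simp add: P_less)

lemma P_le2: "PP s (Suc k) \<le> PP s k + 2" by simp

lemma P_between: "\<exists>k. PP s k \<le> n \<and> n < PP s (Suc k)"
proof (induction n)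
  case 0 show ?case by (rule exI[of _ 0]) simp
next
  case (Suc n)
  then obtain k where k: "PP s k \<le> n" "n < PP s (Suc k)" by blast
  show ?case
  proof (cases "Suc n < PP s (Suc k)")
    case True then show ?thesis using k by (intro exI[of _ k]) simp
  next
    case False
    hence "Suc n = PP s (Suc k)" using k by simp
    then show ?thesis using P_less[of "Suc k"] by (intro exI[of _ "Suc k"]) simp
  qed
qed

lemma b_pos: "s n = s 0 \<Longrightarrow> \<exists>k. n = PP s k"
proof -
  assume sn: "s n = s 0"
  obtain k where k: "PP s k \<le> n" "n < PP s (Suc k)" using P_between by blast
  show ?thesis
  proof (cases "n = PP s k")
    case True then show ?thesis by blast
  next
    case False
    hence n: "n = Suc (PP s k)" using k P_le2[of k] by simp
    hence "PP s (Suc k) = Suc (PP s k)" using sn by simp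
    with k n show ?thesis by simp
  qed
qed

lemma enc: "occ s (PP s k) (mu (s 0) (factor_at (ds s) k m)) \<and>
   PP s (k + m) = PP s k + length (mu (s 0) (factor_at (ds s) k m))"
proof (induction m arbitrary: k)
  case 0 show ?case by (simp add: factor_at_def)
next
  case (Suc m)
  have f: "factor_at (ds s) k (Suc m) = ds s k # factor_at (ds s) (Suc k) m" by (rule factor_at_Suc)
  have o1: "occ s (PP s k) (mu1 (s 0) (ds s k))"
    and l1: "PP s (Suc k) = PP s k + length (mu1 (s 0) (ds s k))"
    using s_P[of k] by (auto simp: mu1_def ds_def)
  have IH: "occ s (PP s (Suc k)) (mu (s 0) (factor_at (ds s) (Suc k) m))"
     "PP s (Suc k + m) = PP s (Suc k) + length (mu (s 0) (factor_at (ds s) (Suc k) m))"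
    using Suc.IH[of "Suc k"] by auto
  show ?case unfolding f using o1 l1 IH by simp
qed

lemma fac_fwd: "u \<in> factors (ds s) \<Longrightarrow> mu (s 0) u @ [s 0] \<in> factors s"
proof -
  assume "u \<in> factors (ds s)"
  then obtain k where k: "occ (ds s) k u" by (auto simp: factors_occ)
  hence u: "u = factor_at (ds s) k (length u)" by (simp add: occ_def)
  have e: "occ s (PP s k) (mu (s 0) u)" "PP s (k + length u) = PP s k + length (mu (s 0) u)"
    using enc[of k "length u"] u by auto
  have "s (PP s (k + length u)) = s 0" by (rule s_P)
  hence "occ s (PP s k) (mu (s 0) u @ [s 0])" using e by simp
  thus ?thesis by (auto simp: factors_occ)
qed

lemma occ_P0: "occ s n (mu (s 0) u @ [s 0]) \<Longrightarrow> s n = s 0"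
  by (cases u) (auto simp: mu1_def split: if_splits)

lemma fac_bwd: "mu (s 0) u @ [s 0] \<in> factors s \<Longrightarrow> u \<in> factors (ds s)"
proof -
  assume "mu (s 0) u @ [s 0] \<in> factors s"
  then obtain n where n: "occ s n (mu (s 0) u @ [s 0])" by (auto simp: factors_occ)
  then obtain k where k: "n = PP s k" using occ_P0 b_pos by blast
  have "occ (ds s) k u" using dec[of s k u "[s 0]"] n k by simp
  thus ?thesis by (auto simp: factors_occ)
qed

lemma se_transfer:
  assumes se: "standard_episturmian s"
  shows "standard_episturmian (ds s)"
  unfolding standard_episturmian_def
proof (intro conjI ballI allI impI)
  fix u assume "u \<in> factors (ds s)"
  hence "mu (s 0) u @ [s 0] \<in> factors s" by (rule fac_fwd)
  hence "rev (mu (s 0) u @ [s 0]) \<in> factors s" using se unfolding standard_episturmian_def by blast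
  hence "mu (s 0) (rev u) @ [s 0] \<in> factors s" by (simp only: mu_rev)
  thus "rev u \<in> factors (ds s)" by (rule fac_bwd)
next
  fix u assume "left_special (ds s) u"
  then obtain x y where xy: "x \<noteq> y" "x # u \<in> factors (ds s)" "y # u \<in> factors (ds s)"
    by (auto simp: left_special_def)
  have ext: "z # (mu (s 0) u @ [s 0]) \<in> factors s" if "z # u \<in> factors (ds s)" for z
  proof -
    have "mu (s 0) (z # u) @ [s 0] \<in> factors s" using that by (rule fac_fwd)
    hence "(butlast (mu1 (s 0) z) @ [z]) @ (mu (s 0) u @ [s 0]) \<in> factors s"
      by (simp only: mu_Cons append_assoc mu1_split[symmetric])
    hence "butlast (mu1 (s 0) z) @ (z # (mu (s 0) u @ [s 0])) \<in> factors s" by simp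
    thus ?thesis by (rule factors_suffix)
  qed
  have "left_special s (mu (s 0) u @ [s 0])"
    unfolding left_special_def using xy ext by blast
  hence "is_prefix_of (mu (s 0) u @ [s 0]) s" using se unfolding standard_episturmian_def by blast
  hence "occ s (PP s 0) (mu (s 0) u @ [s 0])" by (simp add: prefix_occ)
  hence "occ (ds s) 0 u" using dec[of s 0 u "[s 0]"] by simp
  thus "is_prefix_of u (ds s)" by (simp add: prefix_occ)
qed

lemma ap_transfer:
  assumes "ultimately_periodic (ds s)"
  shows "ultimately_periodic s"
proof -
  obtain p N where p: "p > 0" and per: "\<And>n. n \<ge> N \<Longrightarrow> ds s (n + p) = ds s n"
    using assms by (auto simp: ultimately_periodic_def)
  define D where "D = PP s (N + p) - PP s N"
  have lt: "PP s N < PP s (N + p)" using P_smono p by (simp add: strict_mono_less)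
  have PD: "PP s (N + d + p) = PP s (N + d) + D" for d
  proof (induction d)
    case 0 show ?case using lt by (simp add: D_def)
  next
    case (Suc d)
    have "PP s (N + Suc d + p) = PP s (Suc (N + d + p))" by simp
    also have "\<dots> = PP s (N + d + p) + (if ds s (N+d+p) = s 0 then 1 else 2)" by (rule P_Suc)
    also have "ds s (N + d + p) = ds s (N + d)" using per[of "N+d"] by simp
    finally show ?case using Suc P_Suc[of s "N + d"] by (simp del: PP.simps)
  qed
  have D: "D > 0" using lt by (simp add: D_def)
  have "\<forall>n\<ge>PP s N. s (n + D) = s n"
  proof (intro allI impI)
    fix n assume nN: "PP s N \<le> n"
    obtain k where k: "PP s k \<le> n" "n < PP s (Suc k)" using P_between by blast
    have "N \<le> k"
    proof (rule ccontr)
      assume "\<not> N \<le> k"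
      hence "Suc k \<le> N" by simp
      hence "PP s (Suc k) \<le> PP s N" using P_smono by (simp only: strict_mono_less_eq)
      with nN k show False by simp
    qed
    then obtain d where d: "k = N + d" by (metis le_add_diff_inverse)
    have Pk: "PP s (k + p) = PP s k + D" using PD[of d] d by simp
    have "n = PP s k \<or> n = Suc (PP s k)" using k P_le2[of k] by linarith
    then show "s (n + D) = s n"
    proof
      assume n: "n = PP s k"
      have "s (n + D) = s (PP s (k + p))" using Pk n by (simp add: add.commute)
      also have "\<dots> = s 0" by (rule s_P)
      finally show ?thesis using n s_P by simp
    next
      assume n: "n = Suc (PP s k)"
      have "s (n + D) = ds s (k + p)" using Pk n by (simp add: ds_def)
      also have "\<dots> = ds s k" using per[of k] \<open>N \<le> k\<close> by simp
      finally show ?thesis using n by (simp add: ds_def)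
    qed
  qed
  thus ?thesis unfolding ultimately_periodic_def using D by blast
qed

lemma run_less:
  assumes d0: "ds s 0 = s 0" and ap: "\<not> ultimately_periodic s"
  shows "run (ds s) < run s"
proof -
  let ?r = "run (ds s)"
  have dk: "ds s k = s 0" if "k < ?r" for k
    using not_less_Least[of k "\<lambda>n. ds s n \<noteq> ds s 0"] that d0 unfolding run_def by auto
  have Pk: "PP s k = k" if "k \<le> ?r" for k
    using that
  proof (induction k)
    case 0 then show ?case by simp
  next
    case (Suc k) then show ?case using dk[of k] P_Suc[of s k] by simp
  qed
  have sn: "s n = s 0" if "n \<le> ?r" for n
    using Pk[OF that] s_P[of n] by simp
  obtain m where "s m \<noteq> s 0" using nonconst[OF ap] by blast
  hence "s (run s) \<noteq> s 0" unfolding run_def by (rule LeastI)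
  thus ?thesis using sn by (meson not_less)
qed

end



definition Hform :: "(nat \<Rightarrow> 'a list) \<Rightarrow> (nat \<Rightarrow> 'a) \<Rightarrow> 'a \<Rightarrow> bool" where
  "Hform T s a \<longleftrightarrow> is_factorization T s \<and>
     (\<forall>i. \<exists>Q j. 0 < j \<and> T i = Q @ replicate j a \<and> is_prefix_of Q s)"

lemma trail_decomp: "\<exists>Z m. w = Z @ replicate m c \<and> (Z = [] \<or> last Z \<noteq> c)"
proof (induction w rule: rev_induct)
  case Nil show ?case by (rule exI[of _ "[]"], rule exI[of _ 0]) simp
next
  case (snoc x w)
  then obtain Z m where Zm: "w = Z @ replicate m c" "Z = [] \<or> last Z \<noteq> c" by blast
  show ?case
  proof (cases "x = c")
    case True
    then show ?thesis using Zm
      by (intro exI[of _ Z] exI[of _ "Suc m"]) (simp add: replicate_append_same)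
  next
    case False
    then show ?thesis by (intro exI[of _ "w @ [x]"] exI[of _ 0]) simp
  qed
qed

lemma trail_rev: "replicate j c @ xs = replicate m c @ ys \<Longrightarrow> (ys = [] \<or> hd ys \<noteq> c)
  \<Longrightarrow> j \<le> m \<and> xs = replicate (m - j) c @ ys"
proof (induction m arbitrary: j)
  case 0
  then show ?case by (cases j) auto
next
  case (Suc m)
  then show ?case by (cases j) auto
qed

lemma trail_eq: "xs @ replicate j c = ys @ replicate m c \<Longrightarrow> (ys = [] \<or> last ys \<noteq> c)
  \<Longrightarrow> xs = ys @ replicate (m - j) c"
proof -
  assume e: "xs @ replicate j c = ys @ replicate m c" and l: "ys = [] \<or> last ys \<noteq> c"
  have "rev (xs @ replicate j c) = rev (ys @ replicate m c)" using e by (rule arg_cong)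
  hence a: "replicate j c @ rev xs = replicate m c @ rev ys" by (simp only: rev_append rev_replicate)
  have b: "rev ys = [] \<or> hd (rev ys) \<noteq> c" using l by (cases ys rule: rev_cases) auto
  have "rev xs = replicate (m - j) c @ rev ys" using trail_rev[OF a b] by (simp only:)
  hence "rev (rev xs) = rev (replicate (m - j) c @ rev ys)" by (rule arg_cong)
  thus ?thesis by (simp only: rev_rev_ident rev_append rev_replicate)
qed

lemma step:
  fixes s :: "nat \<Rightarrow> 'a" and T :: "nat \<Rightarrow> 'a list"
  assumes se: "standard_episturmian s" and ap: "\<not> ultimately_periodic s" and H: "Hform T s a"
  shows "\<exists>T'. Hform T' (ds s) a \<and>
     (length (T' 0) < length (T 0) \<or> length (T' 0) = length (T 0) \<and> run (ds s) < run s)"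
proof -
  interpret sepw s using separating[OF se ap] by unfold_locales
  define b where "b = s 0"
  from H have fac: "is_factorization T s"
    and hf: "\<And>i. \<exists>Q j. 0 < j \<and> T i = Q @ replicate j a \<and> is_prefix_of Q s"
    by (auto simp: Hform_def)
  define pp where "pp i = (\<Sum>j<i. length (T j))" for i
  have Tne: "T i \<noteq> []" for i using fac by (simp add: is_factorization_def)
  have occT: "occ s (pp i) (T i)" for i
  proof -
    have "T i = factor_at s (pp i) (length (T i))" using fac by (simp add: is_factorization_def pp_def)
    thus ?thesis unfolding occ_def by (rule sym)
  qed
  have pp_Suc: "pp (Suc i) = pp i + length (T i)" for i by (simp add: pp_def)
  have lastT: "last (T i) = a" for i
  proof -
    obtain Q j where "0 < j" "T i = Q @ replicate j a" using hf by blast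
    then show ?thesis by (cases j) (auto simp: replicate_append_same[symmetric])
  qed
  have spp: "s (pp i) = b" for i
  proof -
    obtain Q j where Qj: "0 < j" "T i = Q @ replicate j a" "is_prefix_of Q s" using hf by blast
    show ?thesis
    proof (cases Q)
      case (Cons q qs)
      then have "q = s 0" using Qj(3) by (simp add: prefix_occ)
      then show ?thesis using occT[of i] Qj(2) Cons by (simp add: b_def)
    next
      case Nil
      hence sa: "s (pp i) = a" using occT[of i] Qj(1,2) by (cases j) auto
      show ?thesis
      proof (rule ccontr)
        assume nb: "s (pp i) \<noteq> b"
        show False
        proof (cases i)
          case 0 then show False using nb by (simp add: pp_def b_def)
        next
          case (Suc i')
          have "s (pp i' + length (T i') - 1) = last (T i')" using occ_last[OF occT[of i'] Tne[of i']] .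
          hence x1: "s (pp i' + length (T i') - 1) = a" using lastT by simp
          have x2: "Suc (pp i' + length (T i') - 1) = pp i" using Suc pp_Suc[of i'] Tne[of i']
            by (cases "T i'") auto
          show False using sep[of "pp i' + length (T i') - 1"] x1 x2 sa nb by (simp add: b_def)
        qed
      qed
    qed
  qed
  have ex: "\<exists>k. pp i = PP s k" for i using b_pos spp unfolding b_def by blast
  define kk where "kk i = (SOME k. pp i = PP s k)" for i
  have Pkk: "PP s (kk i) = pp i" for i unfolding kk_def using someI_ex[OF ex[of i]] by simp
  have kk_less: "kk i < kk (Suc i)" for i
  proof -
    have "pp i < pp (Suc i)" using pp_Suc[of i] Tne[of i] by simp
    hence "PP s (kk i) < PP s (kk (Suc i))" using Pkk by simp
    thus ?thesis using P_smono by (simp add: strict_mono_less)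
  qed
  have kk0: "kk 0 = 0"
  proof -
    have "PP s (kk 0) = PP s 0" using Pkk[of 0] by (simp add: pp_def)
    thus ?thesis using strict_mono_eq[OF P_smono, of "kk 0" 0] by (simp only:)
  qed
  define T' where "T' i = factor_at (ds s) (kk i) (kk (Suc i) - kk i)" for i
  have Tmu: "T i = mu b (T' i)" for i
  proof -
    have e0: "occ s (PP s (kk i)) (mu (s 0) (factor_at (ds s) (kk i) (kk (Suc i) - kk i))) \<and>
      PP s (kk i + (kk (Suc i) - kk i)) = PP s (kk i) + length (mu (s 0) (factor_at (ds s) (kk i) (kk (Suc i) - kk i)))"
      by (rule enc)
    have e: "occ s (PP s (kk i)) (mu b (T' i))"
      "PP s (kk i + (kk (Suc i) - kk i)) = PP s (kk i) + length (mu b (T' i))"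
      using e0 unfolding T'_def[symmetric] b_def[symmetric] by auto
    have "kk i + (kk (Suc i) - kk i) = kk (Suc i)" using kk_less[of i] by simp
    hence "length (T i) = length (mu b (T' i))" using e(2) Pkk pp_Suc[of i] by simp
    thus ?thesis using occ_unique[OF occT[of i]] e(1) Pkk by simp
  qed
  have sumT': "(\<Sum>j<i. length (T' j)) = kk i" for i
  proof (induction i)
    case 0 then show ?case by (simp add: kk0)
  next
    case (Suc i) then show ?case using kk_less[of i] by (simp add: T'_def)
  qed
  have fac': "is_factorization T' (ds s)"
    unfolding is_factorization_def
  proof (intro conjI allI)
    fix i show "T' i \<noteq> []" using kk_less[of i] by (simp add: T'_def factor_at_def)
    show "T' i = factor_at (ds s) (\<Sum>j<i. length (T' j)) (length (T' i))"
      by (simp add: sumT') (simp add: T'_def)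
  qed
  have hf': "\<exists>Q j. 0 < j \<and> T' i = Q @ replicate j a \<and> is_prefix_of Q (ds s)" for i
  proof -
    define w where "w = T' i"
    have wne: "w \<noteq> []" using Tne[of i] Tmu[of i] w_def by auto
    have lw: "last w = a" using lastT[of i] Tmu[of i] last_mu[OF wne] w_def by simp
    obtain Q j where Qj: "0 < j" "T i = Q @ replicate j a" "is_prefix_of Q s" using hf by blast
    show ?thesis
    proof (cases "a = b")
      case False
      obtain X where X: "w = X @ [a]" using wne lw by (metis append_butlast_last_id)
      have Ti: "T i = mu b X @ [b, a]" using Tmu[of i] X False w_def by (simp add: mu1_def)
      with Qj have eq: "Q @ replicate j a = mu b X @ [b, a]" by simp
      have j1: "j = 1"
      proof (cases j)
        case 0 then show ?thesis using Qj by simp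
      next
        case (Suc j')
        show ?thesis
        proof (cases j')
          case 0 then show ?thesis using Suc by simp
        next
          case (Suc j'')
          have "replicate (j'' + 2) a = replicate j'' a @ [a, a]"
            by (simp only: replicate_add) (simp add: numeral_2_eq_2)
          moreover have "j = j'' + 2" using \<open>j = Suc j'\<close> Suc by simp
          ultimately have "replicate j a = replicate j'' a @ [a, a]" by simp
          hence "a = b" using eq by simp
          then show ?thesis using False by simp
        qed
      qed
      hence "Q = mu b X @ [b]" using eq by simp
      hence "occ s (PP s 0) (mu (s 0) X @ [s 0])" using Qj(3) by (simp add: prefix_occ b_def)
      hence "occ (ds s) 0 X" using dec[of s 0 X "[s 0]"] by simp
      then show ?thesis using X w_def by (intro exI[of _ X] exI[of _ 1]) (simp add: prefix_occ)
    next
      case True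
      obtain Z m where Zm: "w = Z @ replicate m b" "Z = [] \<or> last Z \<noteq> b"
        using trail_decomp[of w b] by blast
      have m0: "0 < m"
      proof (rule ccontr)
        assume "\<not> 0 < m"
        hence "m = 0" by simp
        hence wZ: "w = Z" using Zm(1) by simp
        hence "last w \<noteq> b" using Zm(2) wne by blast
        thus False using lw True by blast
      qed
      have "mu b w = mu b Z @ replicate m b" using Zm(1) by (simp add: mu_replicate)
      hence eq: "Q @ replicate j b = mu b Z @ replicate m b" using Qj(2) Tmu[of i] w_def True by simp
      have "mu b Z = [] \<or> last (mu b Z) \<noteq> b" using Zm(2) by (cases "Z = []") (simp_all add: last_mu)
      hence "Q = mu b Z @ replicate (m - j) b" using trail_eq[OF eq] by blast
      hence "occ s (PP s 0) (mu (s 0) Z @ [])" using Qj(3) by (simp add: prefix_occ b_def)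
      hence "occ (ds s) 0 Z" using dec[of s 0 Z "[]"] Zm(2) by (auto simp: b_def)
      then show ?thesis using Zm(1) w_def m0 True
        by (intro exI[of _ Z] exI[of _ m]) (simp add: prefix_occ)
    qed
  qed
  have HT': "Hform T' (ds s) a" unfolding Hform_def using fac' hf' by blast
  show ?thesis
  proof (cases "\<exists>x\<in>set (T 0). x \<noteq> b")
    case True
    then obtain x where x: "x \<in> set (mu b (T' 0))" "x \<noteq> b" using Tmu[of 0] by auto
    hence "x \<in> set (T' 0)" using set_mu1[of b "T' 0"] by auto
    hence "filter (\<lambda>x. x \<noteq> b) (T' 0) \<noteq> []" using x(2) by (auto simp: filter_empty_conv)
    hence "length (T' 0) < length (T 0)" using Tmu[of 0] len_mu[of b "T' 0"] by simp
    then show ?thesis using HT' by blast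
  next
    case False
    hence allb: "\<forall>x\<in>set (T' 0). x = b" using Tmu[of 0] set_mu2[of "T' 0" b] by auto
    hence "filter (\<lambda>x. x \<noteq> b) (T' 0) = []" by (simp add: filter_empty_conv)
    hence len: "length (T' 0) = length (T 0)" using Tmu[of 0] len_mu[of b "T' 0"] by simp
    have "T' 0 ! 0 = ds s 0" using kk_less[of 0] by (simp add: T'_def kk0)
    moreover have "T' 0 ! 0 \<in> set (T' 0)" using Tne[of 0] Tmu[of 0] by (auto intro: nth_mem)
    ultimately have "ds s 0 = s 0" using allb b_def by auto
    hence "run (ds s) < run s" using run_less ap by blast
    then show ?thesis using HT' len by blast
  qed
qed

lemma noH_aux:
  "\<forall>(s::nat \<Rightarrow> 'a) T. standard_episturmian s \<longrightarrow> \<not> ultimately_periodic s \<longrightarrow> Hform T s a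
     \<longrightarrow> length (T 0) = n \<longrightarrow> run s = m \<longrightarrow> False"
proof (induction n arbitrary: m rule: less_induct)
  case (less n)
  note IHn = less.IH
  show ?case
  proof (induction m rule: less_induct)
    case (less m)
    show ?case
    proof (intro allI impI)
      fix s :: "nat \<Rightarrow> 'a" and T
      assume se: "standard_episturmian s" and ap: "\<not> ultimately_periodic s" and H: "Hform T s a"
        and n: "length (T 0) = n" and m: "run s = m"
      interpret sepw s using separating[OF se ap] by unfold_locales
      obtain T' where T': "Hform T' (ds s) a"
        "length (T' 0) < length (T 0) \<or> length (T' 0) = length (T 0) \<and> run (ds s) < run s"
        using step[OF se ap H] by blast
      have se': "standard_episturmian (ds s)" using se_transfer[OF se] .
      have ap': "\<not> ultimately_periodic (ds s)" using ap ap_transfer by blast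
      from T'(2) show False
      proof
        assume "length (T' 0) < length (T 0)"
        then show False using IHn[of "length (T' 0)" "run (ds s)"] se' ap' T'(1) n by blast
      next
        assume "length (T' 0) = length (T 0) \<and> run (ds s) < run s"
        then show False using less.IH[of "run (ds s)"] se' ap' T'(1) n m by blast
      qed
    qed
  qed
qed

theorem mainTheorem9:
  fixes s :: "nat \<Rightarrow> 'a::finite" and U :: "nat \<Rightarrow> 'a list"
  assumes "standard_episturmian s"
    and "\<not> ultimately_periodic s"
    and "is_factorization U s"
    and "\<forall>i. is_prefix_of (U i) s"
  shows "\<exists>i j. i \<noteq> j \<and> last (U i) \<noteq> last (U j)"
proof (rule ccontr)
  assume nc: "\<not> ?thesis"
  define a where "a = last (U 0)"
  have la: "last (U i) = a" for i using nc unfolding a_def by (cases "i = 0") blast+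
  have Une: "U i \<noteq> []" for i using assms(3) by (simp add: is_factorization_def)
  have "Hform U s a" unfolding Hform_def
  proof (intro conjI allI)
    show "is_factorization U s" by (rule assms(3))
    fix i
    have h: "U i = butlast (U i) @ [last (U i)]" using Une[of i] by simp
    have r1: "replicate 1 a = [last (U i)]" using la[of i] by simp
    have e: "U i = butlast (U i) @ replicate 1 a" by (subst r1) (rule h)
    have "occ s 0 (butlast (U i) @ [last (U i)])" using assms(4) Une[of i] by (simp add: prefix_occ)
    hence "is_prefix_of (butlast (U i)) s" by (simp add: prefix_occ)
    thus "\<exists>Q j. 0 < j \<and> U i = Q @ replicate j a \<and> is_prefix_of Q s" using e by blast
  qed
  thus False using noH_aux[where n = "length (U 0)" and m = "run s" and a = a] assms(1,2) by blast
qed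

end
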